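(* Fix a natural number $m\ge1$ and reals $a<b$, and let $S=T\cap[a,b]$. Consider the problem ($SDP_0$): minimize $y$ over real numbers $y,x_1,\ldots,x_{2m-1}$ subject to $$y+\sum_{i=1}^k p_{ki}x_i\ \ge\ -p_{k0},\qquad k=1,\ldots,2m-1,$$ and $H_m(1,x_1,\ldots,x_{2m-1},[a,b])\succeq 0$. Let $y^*$ be the optimal (infimal) value and suppose $y^*>0$. Then $$A(\mathbf M,S)\le \frac{1+y^*}{y^*}.$$
   Context: $\mathbf M$ is a 2-point-homogeneous space with its associated real function $\tau(x,y)$ (a function of the distance), $\tau_0:=\tau(x,x)$ (independent of $x$), and $T=\{\tau(x,y):x,y\in\mathbf M\}$. Its zonal spherical functions $\Phi_k$ ($k=0,1,2,\ldots$) are assumed to be real polynomials of degree $k$, written $\Phi_k(t)=\sum_{d=0}^k p_{kd}t^d$, normalized by $\Phi_k(\tau_0)=1$, with the property that for every $k\ge0$ and every finite set $\{x_1,\ldots,x_N\}\subset\mathbf M$ the matrix $(\Phi_k(\tau(x_i,x_j)))_{i,j}$ is positive semidefinite. For $S\subseteq T$, an $S$-code is a finite set $C\subset\mathbf M$ with $\tau(x,y)\in S$ for all distinct $x,y\in C$; $A(\mathbf M,S)$ is the largest cardinality of an $S$-code. For reals $s_0,\ldots,s_{2m-1}$ and $a<b$: $R_m=(s_{i+j-2})_{i,j=1}^m$, $F_m^+(a)=(s_{i+j-1}-a s_{i+j-2})_{i,j=1}^m$, $F_m^-(b)=(b s_{i+j-2}-s_{i+j-1})_{i,j=1}^m$,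 and $H_m(s_0,\ldots,s_{2m-1},[a,b])=\operatorname{diag}(R_m,F_m^+(a),F_m^-(b))$. *)

theory Defs
  imports Complex_Main
begin

text \<open>Square matrices of size n are represented as functions nat => nat => real,
  only the entries with indices < n being relevant (indices start at 0).\<close>

definition psd :: "nat \<Rightarrow> (nat \<Rightarrow> nat \<Rightarrow> real) \<Rightarrow> bool" where
  "psd n A \<longleftrightarrow> (\<forall>i<n. \<forall>j<n. A i j = A j i) \<and>
     (\<forall>v::nat \<Rightarrow> real. 0 \<le> (\<Sum>i<n. \<Sum>j<n. v i * A i j * v j))"

definition Phi :: "(nat \<Rightarrow> nat \<Rightarrow> real) \<Rightarrow> nat \<Rightarrow> real \<Rightarrow> real" where
  "Phi p k t = (\<Sum>d\<le>k. p k d * t ^ d)"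

definition R_mat :: "(nat \<Rightarrow> real) \<Rightarrow> nat \<Rightarrow> nat \<Rightarrow> real" where
  "R_mat s i j = s (i + j)"

definition Fplus_mat :: "(nat \<Rightarrow> real) \<Rightarrow> real \<Rightarrow> nat \<Rightarrow> nat \<Rightarrow> real" where
  "Fplus_mat s a i j = s (i + j + 1) - a * s (i + j)"

definition Fminus_mat :: "(nat \<Rightarrow> real) \<Rightarrow> real \<Rightarrow> nat \<Rightarrow> nat \<Rightarrow> real" where
  "Fminus_mat s b i j = b * s (i + j) - s (i + j + 1)"

definition H_mat :: "nat \<Rightarrow> (nat \<Rightarrow> real) \<Rightarrow> real \<Rightarrow> real \<Rightarrow> nat \<Rightarrow> nat \<Rightarrow> real" where
  "H_mat m s a b i j =
     (if i < m \<and> j < m then R_mat s i j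
      else if m \<le> i \<and> i < 2*m \<and> m \<le> j \<and> j < 2*m then Fplus_mat s a (i - m) (j - m)
      else if 2*m \<le> i \<and> i < 3*m \<and> 2*m \<le> j \<and> j < 3*m then Fminus_mat s b (i - 2*m) (j - 2*m)
      else 0)"

definition Tset :: "('a \<Rightarrow> 'a \<Rightarrow> real) \<Rightarrow> real set" where
  "Tset \<tau> = {\<tau> x y | x y. True}"

definition is_code :: "('a \<Rightarrow> 'a \<Rightarrow> real) \<Rightarrow> real set \<Rightarrow> 'a set \<Rightarrow> bool" where
  "is_code \<tau> S C \<longleftrightarrow> finite C \<and> (\<forall>x\<in>C. \<forall>y\<in>C. x \<noteq> y \<longrightarrow> \<tau> x y \<in> S)"

definition SDP0_feasible :: "(nat \<Rightarrow> nat \<Rightarrow> real) \<Rightarrow> nat \<Rightarrow> real \<Rightarrow> real \<Rightarrow> real set" where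
  "SDP0_feasible p m a b = {y. \<exists>x :: nat \<Rightarrow> real.
      (\<forall>k\<in>{1..2*m-1}. y + (\<Sum>i=1..k. p k i * x i) \<ge> - p k 0) \<and>
      psd (3*m) (H_mat m (\<lambda>i. if i = 0 then 1 else x i) a b)}"

end

theory Submission
  imports Defs
begin

lemma psd_cong: "(\<And>i j. i<n \<Longrightarrow> j<n \<Longrightarrow> A i j = B i j) \<Longrightarrow> psd n A = psd n B"
  unfolding psd_def by (auto intro!: sum.cong)

lemma psd_rank1: "psd n (\<lambda>i j. g i * g j)"
proof -
  have "(\<Sum>i<n. \<Sum>j<n. v i * (g i * g j) * v j) = (\<Sum>i<n. v i * g i)^2" for v :: "nat \<Rightarrow> real"
    by (simp add: power2_eq_square sum_product algebra_simps)
  then show ?thesis unfolding psd_def by simp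
qed

lemma psd_zero: "psd n (\<lambda>i j. 0)" unfolding psd_def by simp

lemma psd_add: "psd n A \<Longrightarrow> psd n B \<Longrightarrow> psd n (\<lambda>i j. A i j + B i j)"
  unfolding psd_def by (auto simp: algebra_simps sum.distrib intro: add_nonneg_nonneg)

lemma psd_scale: "psd n A \<Longrightarrow> (c::real) \<ge> 0 \<Longrightarrow> psd n (\<lambda>i j. c * A i j)"
proof -
  assume A: "psd n A" and c: "c \<ge> 0"
  have "(\<Sum>i<n. \<Sum>j<n. v i * (c * A i j) * v j) = c * (\<Sum>i<n. \<Sum>j<n. v i * A i j * v j)" for v
    by (simp add: sum_distrib_left algebra_simps)
  with A c show ?thesis unfolding psd_def by simp
qed

lemma psd_sum: "finite Q \<Longrightarrow> (\<And>q. q \<in> Q \<Longrightarrow> psd n (A q)) \<Longrightarrow> psd n (\<lambda>i j. \<Sum>q\<in>Q. A q i j)"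
proof (induction Q rule: finite_induct)
  case empty then show ?case using psd_zero by simp
next
  case (insert x F)
  then show ?case using psd_add[of n "A x" "\<lambda>i j. \<Sum>q\<in>F. A q i j"] by simp
qed

definition blk :: "nat \<Rightarrow> nat \<Rightarrow> nat" where
  "blk m i = (if i < m then 0 else if i < 2*m then 1 else 2)"
definition off :: "nat \<Rightarrow> nat \<Rightarrow> nat" where
  "off m i = (if i < m then i else if i < 2*m then i - m else i - 2*m)"
definition Wt :: "real \<Rightarrow> real \<Rightarrow> nat \<Rightarrow> real \<Rightarrow> real" where
  "Wt a b \<beta> t = (if \<beta> = 0 then 1 else if \<beta> = 1 then t - a else b - t)"

lemma psd_rank1w: "(c::real) \<ge> 0 \<Longrightarrow> psd n (\<lambda>i j. c * (g i * g j))"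
  by (rule psd_scale[OF psd_rank1])

lemma H_psd:
  assumes fin: "finite Q" and c: "\<And>q. q \<in> Q \<Longrightarrow> c q \<ge> 0"
    and t: "\<And>q. q \<in> Q \<Longrightarrow> a \<le> t q \<and> t q \<le> b"
    and s: "\<And>d. s d = (\<Sum>q\<in>Q. c q * t q ^ d)"
  shows "psd (3*m) (H_mat m s a b)"
proof -
  define G where "G \<beta> (x::real) i = (if blk m i = \<beta> then x ^ off m i else 0)" for \<beta> x i
  define M where "M q i j = (\<Sum>\<beta><3. Wt a b \<beta> (t q) * (G \<beta> (t q) i * G \<beta> (t q) j))" for q i j
  have W: "Wt a b \<beta> (t q) \<ge> 0" if "q \<in> Q" for \<beta> q using t[OF that] by (auto simp: Wt_def)
  have key: "M q i j =
     (if blk m i = blk m j then Wt a b (blk m i) (t q) * t q ^ (off m i + off m j) else 0)"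
    for q i j
  proof -
    have b3: "blk m i < 3" by (simp add: blk_def)
    have "M q i j = (\<Sum>\<beta><3. if \<beta> = blk m i then
        (if blk m i = blk m j then Wt a b (blk m i) (t q) * t q ^ (off m i + off m j) else 0) else 0)"
      unfolding M_def
      by (rule sum.cong) (simp_all add: G_def power_add)
    also have "\<dots> = (if blk m i = blk m j then Wt a b (blk m i) (t q) * t q ^ (off m i + off m j) else 0)"
      using b3 by (simp add: sum.delta')
    finally show ?thesis .
  qed
  have eq: "H_mat m s a b i j = (\<Sum>q\<in>Q. c q * M q i j)"
    if "i < 3*m" "j < 3*m" for i j
  proof -
    have "(\<Sum>q\<in>Q. c q * M q i j) =
      (\<Sum>q\<in>Q. c q * (if blk m i = blk m j then Wt a b (blk m i) (t q) * t q ^ (off m i + off m j) else 0))"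
      by (simp add: key)
    also have "\<dots> = H_mat m s a b i j"
    proof -
      consider "i < m" "j < m" | "m \<le> i" "i < 2*m" "m \<le> j" "j < 2*m"
        | "2*m \<le> i" "2*m \<le> j" | "blk m i \<noteq> blk m j"
        unfolding blk_def by (cases "i<m"; cases "i<2*m"; cases "j<m"; cases "j<2*m") auto
      then show ?thesis
      proof cases
        case 1
        then show ?thesis by (simp add: blk_def off_def Wt_def H_mat_def R_mat_def s)
      next
        case 2
        have "(\<Sum>q\<in>Q. c q * ((t q - a) * t q ^ (i - m + (j - m)))) =
              (\<Sum>q\<in>Q. c q * t q ^ (i - m + (j - m) + 1)) - a * (\<Sum>q\<in>Q. c q * t q ^ (i - m + (j - m)))"
          by (simp add: sum_distrib_left sum_subtractf[symmetric] algebra_simps)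
        then show ?thesis using 2 by (simp add: blk_def off_def Wt_def H_mat_def Fplus_mat_def s)
      next
        case 3
        have "(\<Sum>q\<in>Q. c q * ((b - t q) * t q ^ (i - 2*m + (j - 2*m)))) =
              b * (\<Sum>q\<in>Q. c q * t q ^ (i - 2*m + (j - 2*m))) - (\<Sum>q\<in>Q. c q * t q ^ (i - 2*m + (j - 2*m) + 1))"
          by (simp add: sum_distrib_left sum_subtractf[symmetric] algebra_simps)
        then show ?thesis using 3 that by (simp add: blk_def off_def Wt_def H_mat_def Fminus_mat_def s)
      next
        case 4
        then show ?thesis using that by (auto simp: blk_def H_mat_def split: if_splits)
      qed
    qed
    finally show ?thesis by (rule sym)
  qed
  have Mpsd: "psd (3*m) (M q)" if "q \<in> Q" for q
  proof -
    have "psd (3*m) (\<lambda>i j. \<Sum>\<beta>\<in>{..<3}. Wt a b \<beta> (t q) * (G \<beta> (t q) i * G \<beta> (t q) j))"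
      by (rule psd_sum) (simp_all add: psd_rank1w W[OF that])
    then show ?thesis unfolding M_def by simp
  qed
  have "psd (3*m) (\<lambda>i j. \<Sum>q\<in>Q. c q * M q i j)"
    by (rule psd_sum[OF fin]) (simp add: psd_scale Mpsd c)
  moreover have "psd (3*m) (H_mat m s a b) = psd (3*m) (\<lambda>i j. \<Sum>q\<in>Q. c q * M q i j)"
    by (rule psd_cong) (rule eq)
  ultimately show ?thesis by (simp only:)
qed

lemma sum_offdiag: "i < (N::nat) \<Longrightarrow> (\<Sum>j<N. if i = j then 0 else f j) = (\<Sum>j<N. f j) - (f i :: real)"
proof -
  assume i: "i < N"
  have "(\<Sum>j<N. f j) = (\<Sum>j<N. (if i = j then f j else 0) + (if i = j then 0 else f j))"
    by (rule sum.cong) auto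
  also have "\<dots> = f i + (\<Sum>j<N. if i = j then 0 else f j)"
    using i by (simp add: sum.distrib sum.delta)
  finally show ?thesis by simp
qed

theorem theorem4p1:
  fixes \<tau> :: "'a \<Rightarrow> 'a \<Rightarrow> real" and \<tau>0 :: real
    and p :: "nat \<Rightarrow> nat \<Rightarrow> real"
    and m :: nat and a b ystar :: real
  assumes tau_sym: "\<And>x y. \<tau> x y = \<tau> y x"
    and tau_diag: "\<And>x. \<tau> x x = \<tau>0"
    and deg: "\<And>k. p k k \<noteq> 0"
    and norm: "\<And>k. Phi p k \<tau>0 = 1"
    and pos_def: "\<And>k N (xs :: nat \<Rightarrow> 'a). inj_on xs {..<N} \<Longrightarrow>
                    psd N (\<lambda>i j. Phi p k (\<tau> (xs i) (xs j)))"
    and m_pos: "1 \<le> m"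
    and ab: "a < b"
    and bdd: "bdd_below (SDP0_feasible p m a b)"
    and ystar_def: "ystar = Inf (SDP0_feasible p m a b)"
    and ystar_pos: "ystar > 0"
  shows "\<forall>C. is_code \<tau> (Tset \<tau> \<inter> {a..b}) C \<longrightarrow> real (card C) \<le> (1 + ystar) / ystar"
proof (intro allI impI)
  fix C assume code: "is_code \<tau> (Tset \<tau> \<inter> {a..b}) C"
  define N where "N = card C"
  show "real (card C) \<le> (1 + ystar) / ystar"
  proof (cases "N \<le> 1")
    case True
    have "1 \<le> (1 + ystar) / ystar" using ystar_pos by (simp add: field_simps)
    then show ?thesis using True unfolding N_def
      by (metis of_nat_le_1_iff order_trans)
  next
    case False
    hence N2: "N \<ge> 2" by simp
    have finC: "finite C" using code by (simp add: is_code_def)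
    obtain xs where bij: "bij_betw xs {0..<N} C"
      using ex_bij_betw_nat_finite[OF finC] N_def by blast
    have inj: "inj_on xs {..<N}" using bij by (simp add: bij_betw_def atLeast0LessThan)
    have xsC: "xs i \<in> C" if "i < N" for i using bij that by (auto simp: bij_betw_def)
    have tab: "a \<le> \<tau> (xs i) (xs j) \<and> \<tau> (xs i) (xs j) \<le> b" if "i < N" "j < N" "i \<noteq> j" for i j
    proof -
      have "xs i \<noteq> xs j" using inj that by (auto dest: inj_onD)
      then show ?thesis using code xsC[OF that(1)] xsC[OF that(2)] by (auto simp: is_code_def)
    qed
    define w :: real where "w = 1 / (real N * (real N - 1))"
    define s where "s d = w * (\<Sum>i<N. \<Sum>j<N. if i = j then 0 else \<tau> (xs i) (xs j) ^ d)" for d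
    define Q where "Q = {..<N} \<times> {..<N}"
    define c where "c q = (if fst q = snd q then 0 else w)" for q :: "nat \<times> nat"
    define t where "t q = (if fst q = snd q then a else \<tau> (xs (fst q)) (xs (snd q)))" for q
    have wpos: "w \<ge> 0" using N2 by (simp add: w_def)
    have s_eq: "s d = (\<Sum>q\<in>Q. c q * t q ^ d)" for d
      unfolding s_def Q_def sum_distrib_left sum.cartesian_product
      by (intro sum.cong refl) (auto simp: c_def t_def)
    have psdH: "psd (3*m) (H_mat m s a b)"
      by (rule H_psd[where Q=Q and c=c and t=t and s=s]) (use wpos tab ab in \<open>auto simp: Q_def c_def t_def s_eq\<close>)
    have s0: "s 0 = 1"
    proof -
      have "(\<Sum>i<N. \<Sum>j<N. if i = j then 0 else \<tau> (xs i) (xs j) ^ 0) = (\<Sum>i<N. real N - 1)"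
        by (intro sum.cong refl) (simp add: sum_offdiag)
      then show ?thesis using N2 by (simp add: s_def w_def)
    qed
    have sfun: "(\<lambda>i. if i = 0 then 1 else s i) = s" using s0 by auto
    define y :: real where "y = 1 / (real N - 1)"
    have feas: "y \<in> SDP0_feasible p m a b"
      unfolding SDP0_feasible_def
    proof (intro CollectI exI[of _ s] conjI ballI)
      show "psd (3 * m) (H_mat m (\<lambda>i. if i = 0 then 1 else s i) a b)" using psdH sfun by simp
    next
      fix k assume "k \<in> {1..2*m-1}"
      define D where "D = (\<Sum>i<N. \<Sum>j<N. if i = j then 0 else Phi p k (\<tau> (xs i) (xs j)))"
      have P: "\<forall>v. 0 \<le> (\<Sum>i<N. \<Sum>j<N. v i * Phi p k (\<tau> (xs i) (xs j)) * v j)"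
        using pos_def[OF inj, of k] unfolding psd_def by blast
      have "0 \<le> (\<Sum>i<N. \<Sum>j<N. 1 * Phi p k (\<tau> (xs i) (xs j)) * 1)"
        using P[rule_format, of "\<lambda>_. 1"] by simp
      also have "\<dots> = (\<Sum>i<N. (\<Sum>j<N. if i = j then 0 else Phi p k (\<tau> (xs i) (xs j))) + 1)"
        by (intro sum.cong refl) (simp add: sum_offdiag tau_diag norm)
      also have "\<dots> = D + real N" by (simp add: D_def sum.distrib)
      finally have D: "D \<ge> - real N" by simp
      define g where "g d i j = (if i = j then 0 else w * (p k d * \<tau> (xs i) (xs j) ^ d))" for d i j
      have "(\<Sum>d\<le>k. p k d * s d) = (\<Sum>d\<le>k. \<Sum>i<N. \<Sum>j<N. g d i j)"
        unfolding s_def g_def by (simp add: sum_distrib_left if_distrib mult.left_commute cong: if_cong)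
      also have "\<dots> = (\<Sum>i<N. \<Sum>d\<le>k. \<Sum>j<N. g d i j)" by (rule sum.swap)
      also have "\<dots> = (\<Sum>i<N. \<Sum>j<N. \<Sum>d\<le>k. g d i j)"
        by (rule sum.cong[OF refl], rule sum.swap)
      also have "\<dots> = w * D"
        unfolding D_def Phi_def sum_distrib_left
      proof (intro sum.cong refl)
        fix i j
        show "(\<Sum>d\<le>k. g d i j) = w * (if i = j then 0 else (\<Sum>d\<le>k. p k d * \<tau> (xs i) (xs j) ^ d))"
          by (cases "i = j") (simp_all add: g_def sum_distrib_left)
      qed
      finally have wD: "(\<Sum>d\<le>k. p k d * s d) = w * D" .
      moreover note wD
      moreover have "(\<Sum>d\<le>k. p k d * s d) = p k 0 + (\<Sum>d=1..k. p k d * s d)"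
        by (simp add: sum.atMost_shift sum.atLeast1_atMost_eq s0)
      moreover have "w * D \<ge> - y"
      proof -
        have "w * D \<ge> w * (- real N)" using mult_left_mono[OF D wpos] by simp
        also have "w * (- real N) = - y" using N2 by (simp add: w_def y_def field_simps)
        finally show ?thesis .
      qed
      ultimately show "y + (\<Sum>i = 1..k. p k i * s i) \<ge> - p k 0" by linarith
    qed
    have "ystar \<le> y" unfolding ystar_def using cInf_lower[OF feas bdd] .
    then have "ystar * (real N - 1) \<le> 1" using N2 by (simp add: y_def field_simps)
    then have "real N \<le> (1 + ystar) / ystar" using ystar_pos by (simp add: field_simps)
    then show ?thesis by (simp add: N_def)
  qed
qed

end
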